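(* Fix $\varepsilon>0$ and an integer $r\ge100$ with $\frac{3r-1}{r-1}\left(\frac27-\frac\varepsilon2\right)<\frac67-\varepsilon$. Let $n^{0.99}<t<n$, let $\mathcal S$ be a $t$-intersecting family of partial permutations each of size at most $q$ ($t\le q\le n$) with peeling families $\mathcal T_k,\mathcal W_k$, let $k$ be an integer with $1\le k\le \min(q-t,t^{2/7-\varepsilon/2})$, and let $A_1,\dots,A_r\in\mathcal W_k$ satisfy $|A_1\cap\cdots\cap A_r|=t-(r-2)k$. For $0\le j\le k$ let $\mathcal G_j=\{T\in\mathcal T_k: |T|=t+j\}$ (so $\mathcal G_k=\mathcal W_k$). (a) There exist $t_0,k_0$ depending only on $\varepsilon$ (and $r$) such that if $t>t_0$ and $k>k_0$, then for every $0\le j\le k-1$, $|\mathcal G_j|\le t^{-0.1}\,2^{j-k}\binom tj$. (b) For every $\eta>0$ there exist $t_0,k_0$ (depending on $\varepsilon,r,\eta$) such that if $t>t_0$ and $k>k_0$, then $|\mathcal W_k|\le(1+\eta)\binom tk$, and the number of members of $\mathcal W_k$ not contained in $A_1\cup\cdots\cup A_r$ is at most $\eta\binom tk$.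
   Context: Each permutation $\sigma$ of $[n]$ is identified with the set $\{(i,\sigma(i)):i\in[n]\}\subseteq[n]^2$; a partial permutation is a subset of such a set. A family is $t$-intersecting if any two (not necessarily distinct) members $A,B$ have $|A\cap B|\ge t$. A simplification of a $t$-intersecting family is any family obtained by repeatedly applying, in any order, the following operations until neither applies: (i) delete a member that is contained in another, different member; (ii) replace a member $S$ by a proper subset $X\subsetneq S$ provided the resulting family is still $t$-intersecting. Peeling: $\mathcal T_{q-t}$ is a simplification of $\mathcal S$, and for $k=q-t,q-t-1,\dots,1$, $\mathcal W_k=\{T\in\mathcal T_k:|T|=t+k\}$ and $\mathcal T_{k-1}$ is a simplification of $\mathcal T_k\setminus\mathcal W_k$ (any choices of simplifications are allowed). *)

theory Defs
  imports Complex_Main "HOL-Combinatorics.Permutations"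
begin

type_synonym pperm = "(nat \<times> nat) set"

definition partial_perm :: "nat \<Rightarrow> pperm \<Rightarrow> bool" where
  "partial_perm n P \<longleftrightarrow>
     (\<exists>\<sigma>. \<sigma> permutes {1..n} \<and> P \<subseteq> {(i, \<sigma> i) | i. i \<in> {1..n}})"

definition t_intersecting :: "nat \<Rightarrow> 'a set set \<Rightarrow> bool" where
  "t_intersecting t F \<longleftrightarrow> (\<forall>A\<in>F. \<forall>B\<in>F. t \<le> card (A \<inter> B))"

definition simp_step :: "nat \<Rightarrow> 'a set set \<Rightarrow> 'a set set \<Rightarrow> bool" where
  "simp_step t F G \<longleftrightarrow>
     (\<exists>A B. A \<in> F \<and> B \<in> F \<and> A \<noteq> B \<and> A \<subseteq> B \<and> G = F - {A}) \<or>
     (\<exists>S X. S \<in> F \<and> X \<subset> S \<and> G = insert X (F - {S}) \<and> t_intersecting t G)"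

definition simplification :: "nat \<Rightarrow> 'a set set \<Rightarrow> 'a set set \<Rightarrow> bool" where
  "simplification t F G \<longleftrightarrow> (simp_step t)\<^sup>*\<^sup>* F G \<and> \<not> (\<exists>H. simp_step t G H)"

definition Wfam :: "nat \<Rightarrow> (nat \<Rightarrow> 'a set set) \<Rightarrow> nat \<Rightarrow> 'a set set" where
  "Wfam t T k = {X \<in> T k. card X = t + k}"

definition peeling :: "nat \<Rightarrow> nat \<Rightarrow> 'a set set \<Rightarrow> (nat \<Rightarrow> 'a set set) \<Rightarrow> bool" where
  "peeling t q S T \<longleftrightarrow>
     simplification t S (T (q - t)) \<and>
     (\<forall>k\<in>{1..q - t}. simplification t (T k - Wfam t T k) (T (k - 1)))"

end

theory Submission
  imports Defs
begin


lemma simp_step_inv: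
  assumes "simp_step t F G" "t_intersecting t F" "\<forall>X\<in>F. X \<subseteq> W"
  shows "t_intersecting t G \<and> (\<forall>X\<in>G. X \<subseteq> W)"
proof -
  from assms(1) consider
      (del) A B where "A \<in> F" "B \<in> F" "A \<noteq> B" "A \<subseteq> B" "G = F - {A}"
    | (rep) S X where "S \<in> F" "X \<subset> S" "G = insert X (F - {S})" "t_intersecting t G"
    unfolding simp_step_def by blast
  then show ?thesis
  proof cases
    case del
    have "t_intersecting t G" using assms(2) del(5) unfolding t_intersecting_def by blast
    moreover have "\<forall>X\<in>G. X \<subseteq> W" using assms(3) del(5) by blast
    ultimately show ?thesis by blast
  next
    case rep
    have "\<forall>X\<in>G. X \<subseteq> W" using assms(3) rep(1,2,3) by blast
    then show ?thesis using rep(4) by blast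
  qed
qed

lemma rtranclp_simp_inv:
  assumes "(simp_step t)\<^sup>*\<^sup>* F G" "t_intersecting t F" "\<forall>X\<in>F. X \<subseteq> W"
  shows "t_intersecting t G \<and> (\<forall>X\<in>G. X \<subseteq> W)"
  using assms
proof (induction rule: rtranclp_induct)
  case base then show ?case by simp
next
  case (step y z)
  have IH: "t_intersecting t y \<and> (\<forall>X\<in>y. X \<subseteq> W)" using step.IH step.prems by blast
  show ?case using simp_step_inv[OF step.hyps(2) conjunct1[OF IH] conjunct2[OF IH]] .
qed

lemma peeling_inv:
  assumes "peeling t q S T" "t_intersecting t S" "\<forall>X\<in>S. X \<subseteq> W" "k \<le> q - t"
  shows "t_intersecting t (T k) \<and> (\<forall>X\<in>T k. X \<subseteq> W)"
proof -
  have "\<And>m. m \<le> q - t \<Longrightarrow> t_intersecting t (T (q - t - m)) \<and> (\<forall>X\<in>T (q - t - m). X \<subseteq> W)"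
  proof -
    fix m show "m \<le> q - t \<Longrightarrow> t_intersecting t (T (q - t - m)) \<and> (\<forall>X\<in>T (q - t - m). X \<subseteq> W)"
    proof (induction m)
      case 0
      have "simplification t S (T (q - t))" using assms(1) unfolding peeling_def by blast
      then have "(simp_step t)\<^sup>*\<^sup>* S (T (q - t))" unfolding simplification_def by blast
      then show ?case using rtranclp_simp_inv[OF _ assms(2,3)] by simp
    next
      case (Suc m)
      have IH: "t_intersecting t (T (q - t - m)) \<and> (\<forall>X\<in>T (q - t - m). X \<subseteq> W)" using Suc by simp
      have mem: "q - t - m \<in> {1..q-t}" using Suc.prems by auto
      have sim: "simplification t (T (q - t - m) - Wfam t T (q - t - m)) (T (q - t - m - 1))"
        using bspec[OF conjunct2[OF assms(1)[unfolded peeling_def]] mem] .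
      have prev: "t_intersecting t (T (q - t - m) - Wfam t T (q - t - m)) \<and>
            (\<forall>X\<in>T (q - t - m) - Wfam t T (q - t - m). X \<subseteq> W)"
      proof
        show "t_intersecting t (T (q - t - m) - Wfam t T (q - t - m))"
          using IH unfolding t_intersecting_def by (meson DiffD1)
        show "\<forall>X\<in>T (q - t - m) - Wfam t T (q - t - m). X \<subseteq> W" using IH by (meson DiffD1)
      qed
      then have "t_intersecting t (T (q - t - m - 1)) \<and> (\<forall>X\<in>T (q - t - m - 1). X \<subseteq> W)"
      proof -
        have "(simp_step t)\<^sup>*\<^sup>* (T (q - t - m) - Wfam t T (q - t - m)) (T (q - t - m - 1))"
          using sim unfolding simplification_def by (rule conjunct1)
        from rtranclp_simp_inv[OF this prev[THEN conjunct1] prev[THEN conjunct2]] show ?thesis .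
      qed
      moreover have "q - t - Suc m = q - t - m - 1" by simp
      ultimately show ?case by simp
    qed
  qed
  from this[of "q - t - k"] have "t_intersecting t (T (q - t - (q - t - k))) \<and> (\<forall>X\<in>T (q - t - (q - t - k)). X \<subseteq> W)"
    by simp
  moreover have "q - t - (q - t - k) = k" using assms(4) by simp
  ultimately show ?thesis by simp
qed

lemma partial_perm_sub:
  assumes "partial_perm n P" shows "P \<subseteq> {1..n} \<times> {1..n}"
proof -
  obtain \<sigma> where s: "\<sigma> permutes {1..n}" "P \<subseteq> {(i, \<sigma> i) | i. i \<in> {1..n}}"
    using assms unfolding partial_perm_def by blast
  have "\<And>i. i \<in> {1..n} \<Longrightarrow> \<sigma> i \<in> {1..n}" using permutes_in_image[OF s(1)] by blast
  show ?thesis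
  proof
    fix x assume "x \<in> P"
    then obtain i where i: "x = (i, \<sigma> i)" "i \<in> {1..n}" using s(2) by blast
    then have "\<sigma> i \<in> {1..n}" using \<open>\<And>i. i \<in> {1..n} \<Longrightarrow> \<sigma> i \<in> {1..n}\<close> by blast
    then show "x \<in> {1..n} \<times> {1..n}" using i by simp
  qed
qed




lemma structure_S1:
  fixes A :: "nat \<Rightarrow> 'a set" and I :: "nat set"
  assumes finI: "finite I" and cardI: "card I = r"
    and finA: "\<forall>i\<in>I. finite (A i)" and cardA: "\<forall>i\<in>I. card (A i) = t + k"
    and pair: "\<forall>i\<in>I. \<forall>l\<in>I. t \<le> card (A i \<inter> A l)"
    and Cdef: "C = (\<Inter>i\<in>I. A i)" and cardC: "card C + (r - 2) * k = t"
    and x: "x \<in> (\<Union>i\<in>I. A i) - C" and pq: "p \<in> I" "q \<in> I" "x \<notin> A p" "x \<notin> A q"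
  shows "p = q"
proof (rule ccontr)
  assume npq: "p \<noteq> q"
  obtain l where l: "l \<in> I" "x \<in> A l" using x by blast
  have lp: "l \<noteq> p" "l \<noteq> q" using l pq by auto
  have CA: "C \<subseteq> A l" using Cdef l by blast
  have finl: "finite (A l)" using finA l by blast
  define X1 where "X1 = A l - A p"
  define X2 where "X2 = (\<Union>i\<in>I-{l,p}. A l - A i)"
  have sub: "A l - C \<subseteq> X1 \<union> X2" using Cdef unfolding X1_def X2_def by blast
  have fin1: "finite X1" "finite X2" using finl finI unfolding X1_def X2_def by auto
  have xin: "x \<in> X1 \<inter> X2" using l pq lp npq unfolding X1_def X2_def by blast
  have c12: "card (X1 \<inter> X2) \<ge> 1"
    proof -
    have "X1 \<inter> X2 \<noteq> {}" using xin by blast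
    moreover have "finite (X1 \<inter> X2)" using fin1 by simp
    ultimately show ?thesis by (simp add: Suc_leI card_gt_0_iff)
  qed
  have cUI: "card (X1 \<union> X2) + card (X1 \<inter> X2) = card X1 + card X2"
    using card_Un_Int[OF fin1] by simp
  have cX1: "card X1 \<le> k"
  proof -
    have "card (A l) = card (A l \<inter> A p) + card (A l - A p)"
      using finl by (metis card_Int_Diff)
    then show ?thesis using cardA pair l pq unfolding X1_def by force
  qed
  have cX2: "card X2 \<le> (r - 2) * k"
  proof -
    have "card X2 \<le> (\<Sum>i\<in>I-{l,p}. card (A l - A i))"
      unfolding X2_def using finI by (intro card_UN_le) simp
    also have "\<dots> \<le> (\<Sum>i\<in>I-{l,p}. k)"
    proof (rule sum_mono)
      fix i assume i: "i \<in> I - {l, p}"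
      have "card (A l) = card (A l \<inter> A i) + card (A l - A i)"
        using finl by (metis card_Int_Diff)
      then show "card (A l - A i) \<le> k" using cardA pair l i by force
    qed
    also have "\<dots> = card (I - {l,p}) * k" by simp
    also have "card (I - {l,p}) = r - 2" using cardI l pq lp finI
      by (simp add: card_Diff_subset)
    finally show ?thesis by simp
  qed
  have r2: "r \<ge> 2" using cardI l pq lp npq finI
  proof -
    have "card {p, q} \<le> card I" using pq finI by (intro card_mono) auto
    then show ?thesis using npq cardI by simp
  qed
  then obtain r' where r': "r = r' + 2" by (metis add.commute le_Suc_ex)
  have "card (A l - C) = card (A l) - card C" using CA finl by (meson card_Diff_subset finite_subset)
  then have "card (A l - C) = (r' + 1) * k" using cardA l cardC r' by simp
  moreover have "card (A l - C) \<le> card (X1 \<union> X2)" using sub fin1 by (simp add: card_mono)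
  ultimately show False using c12 cUI cX1 cX2 r' by simp
qed

lemma structure_S2:
  fixes A :: "nat \<Rightarrow> 'a set" and I :: "nat set"
  assumes finI: "finite I" and cardI: "card I = r" and r2: "2 \<le> r"
    and finA: "\<forall>i\<in>I. finite (A i)" and cardA: "\<forall>i\<in>I. card (A i) = t + k"
    and pair: "\<forall>i\<in>I. \<forall>l\<in>I. t \<le> card (A i \<inter> A l)"
    and Cdef: "C = (\<Inter>i\<in>I. A i)" and cardC: "card C + (r - 2) * k = t"
  shows "card ((\<Union>i\<in>I. A i) - C) = r * k"
proof -
  define U where "U = (\<Union>i\<in>I. A i)"
  have finU: "finite U" using finI finA unfolding U_def by blast
  obtain r' where r': "r = r' + 2" using r2 by (metis add.commute le_Suc_ex)
  have each: "card (U - C) = (r' + 1) * k + card (U - A i)" if i: "i \<in> I" for i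
  proof -
    have CA: "C \<subseteq> A i" using Cdef i by blast
    have AU: "A i \<subseteq> U" using i unfolding U_def by blast
    have "U - C = (A i - C) \<union> (U - A i)" using CA AU by blast
    moreover have "(A i - C) \<inter> (U - A i) = {}" by blast
    ultimately have "card (U - C) = card (A i - C) + card (U - A i)"
      using finU AU by (metis card_Un_disjoint finite_Diff finite_subset)
    moreover have "card (A i - C) = card (A i) - card C"
      using CA finA i by (meson card_Diff_subset finite_subset)
    ultimately show ?thesis using cardA i cardC r' by simp
  qed
  have dis: "card (U - C) = (\<Sum>i\<in>I. card (U - A i))"
  proof -
    have "U - C = (\<Union>i\<in>I. U - A i)" using Cdef unfolding U_def by blast
    moreover have "card (\<Union>i\<in>I. U - A i) = (\<Sum>i\<in>I. card (U - A i))"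
    proof (rule card_UN_disjoint)
      show "finite I" by fact
      show "\<forall>i\<in>I. finite (U - A i)" using finU by simp
      show "\<forall>i\<in>I. \<forall>j\<in>I. i \<noteq> j \<longrightarrow> (U - A i) \<inter> (U - A j) = {}"
      proof (intro ballI impI)
        fix i j assume ij: "i \<in> I" "j \<in> I" "i \<noteq> j"
        show "(U - A i) \<inter> (U - A j) = {}"
        proof (rule ccontr)
          assume "(U - A i) \<inter> (U - A j) \<noteq> {}"
          then obtain x where x: "x \<in> U" "x \<notin> A i" "x \<notin> A j" by blast
          have "x \<notin> C" using x ij Cdef by blast
          then have "x \<in> (\<Union>i\<in>I. A i) - C" using x unfolding U_def by blast
          then have "i = j" using structure_S1[OF finI cardI finA cardA pair Cdef cardC] ij x by blast
          then show False using ij by simp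
        qed
      qed
    qed
    ultimately show ?thesis by simp
  qed
  have "r * card (U - C) = (\<Sum>i\<in>I. card (U - C))" using cardI by simp
  also have "\<dots> = (\<Sum>i\<in>I. (r' + 1) * k + card (U - A i))" using each by (intro sum.cong) auto
  also have "\<dots> = r * ((r' + 1) * k) + card (U - C)" using dis cardI by (simp add: sum.distrib)
  finally have "(r' + 1) * card (U - C) = (r' + 1) * (r * k)" using r' by (simp add: algebra_simps)
  then have "card (U - C) = r * k" using mult_left_cancel[of "r'+1"] by (metis Suc_eq_plus1 nat.distinct(1))
  then show ?thesis unfolding U_def .
qed




definition Rset :: "nat \<Rightarrow> nat \<Rightarrow> nat \<Rightarrow> nat \<Rightarrow> nat \<Rightarrow> bool \<Rightarrow> (nat \<times> nat) set" where
  "Rset cC cD r k j sf = {(a,b). a \<le> cC \<and> b \<le> cD \<and> r*(a+b) \<le> r*k + b \<and> 2*k \<le> a+b+j \<and> (sf \<longrightarrow> 2*k < a+b+j)}"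

lemma finite_Rset: "finite (Rset cC cD r k j sf)"
proof -
  have "Rset cC cD r k j sf \<subseteq> {0..cC} \<times> {0..cD}" unfolding Rset_def by auto
  then show ?thesis by (rule finite_subset) simp
qed

lemma count_fam:
  fixes A :: "nat \<Rightarrow> 'a set" and I :: "nat set" and G U C :: "'a set" and F :: "'a set set"
  assumes finG: "finite G" and UG: "U \<subseteq> G" and CU: "C \<subseteq> U"
    and finI: "finite I" and cardI: "card I = r"
    and AU: "\<forall>i\<in>I. A i \<subseteq> U" and CA: "\<forall>i\<in>I. C \<subseteq> A i" and cardA: "\<forall>i\<in>I. card (A i) = t + k"
    and cov: "\<forall>x\<in>U-C. \<exists>i\<in>I. x \<notin> A i"
    and uniq: "\<forall>x\<in>U-C. \<forall>p\<in>I. \<forall>q\<in>I. x \<notin> A p \<longrightarrow> x \<notin> A q \<longrightarrow> p = q"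
    and cardU: "card U = t + 2*k"
    and Fsub: "\<forall>Y\<in>F. Y \<subseteq> G \<and> card Y = t + j \<and> (\<forall>i\<in>I. t \<le> card (Y \<inter> A i)) \<and> (sf \<longrightarrow> \<not> Y \<subseteq> U)"
  shows "card F \<le> (\<Sum>(a,b)\<in>Rset (card C) (card (U-C)) r k j sf.
            (card C choose a) * (card (U-C) choose b) * (card (G-U) choose (a+b+j-2*k)))"
proof -
  define R where "R = Rset (card C) (card (U-C)) r k j sf"
  define S :: "'a set \<Rightarrow> nat \<Rightarrow> 'a set set" where "S X m = {P. P \<subseteq> X \<and> card P = m}" for X m
  define B where "B = (\<lambda>(a,b). S C a \<times> S (U-C) b \<times> S (G-U) (a+b+j-2*k))"
  define \<phi> where "\<phi> Y = (C - Y, (U - C) - Y, Y - U)" for Y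
  have finU: "finite U" using finG UG finite_subset by blast
  have inj: "inj_on \<phi> F"
  proof (rule inj_onI)
    fix Y Z assume "Y \<in> F" "Z \<in> F" "\<phi> Y = \<phi> Z"
    then have e: "C - Y = C - Z" "(U - C) - Y = (U - C) - Z" "Y - U = Z - U" unfolding \<phi>_def by auto
    have "Y = (U - (C - Y) - ((U - C) - Y)) \<union> (Y - U)" using CU by blast
    also have "\<dots> = (U - (C - Z) - ((U - C) - Z)) \<union> (Z - U)" using e by simp
    also have "\<dots> = Z" using CU by blast
    finally show "Y = Z" .
  qed
  have img: "\<phi> ` F \<subseteq> (\<Union>p\<in>R. B p)"
  proof
    fix z assume "z \<in> \<phi> ` F"
    then obtain Y where Y: "Y \<in> F" "z = \<phi> Y" by blast
    have YG: "Y \<subseteq> G" and cY: "card Y = t + j" and tY: "\<forall>i\<in>I. t \<le> card (Y \<inter> A i)"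
      and sY: "sf \<longrightarrow> \<not> Y \<subseteq> U" using Fsub Y(1) by auto
    have finY: "finite Y" using YG finG finite_subset by blast
    define Q where "Q = (U - C) - Y"
    define a where "a = card (C - Y)"
    define b where "b = card Q"
    define d where "d = card (Y - U)"
    have finC: "finite C" using CU finU finite_subset by blast
    have finQ: "finite Q" unfolding Q_def using finU by simp
    have c1: "card Y = card (Y \<inter> U) + d" unfolding d_def using finY by (metis card_Int_Diff)
    have c2: "card U = card (U \<inter> Y) + card (U - Y)" using finU by (metis card_Int_Diff)
    have c3: "card (U - Y) = a + b"
    proof -
      have "U - Y = (C - Y) \<union> Q" "(C - Y) \<inter> Q = {}" unfolding Q_def using CU by blast+
      then show ?thesis unfolding a_def b_def using finC finQ by (simp add: card_Un_disjoint)
    qed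
    have "Y \<inter> U = U \<inter> Y" by blast
    then have YU: "card (Y \<inter> U) = card (U \<inter> Y)" by simp
    then have eqd: "d + 2*k = a + b + j" using c1 c2 c3 cY cardU YU by linarith
    then have dd: "d = a + b + j - 2*k" by linarith
    have le2: "2*k \<le> a + b + j" using eqd by linarith
    have sf2: "sf \<longrightarrow> 2*k < a + b + j"
    proof
      assume sf
      then have "Y - U \<noteq> {}" using sY by blast
      then have "d > 0" unfolding d_def using finY by (simp add: card_gt_0_iff)
      then show "2*k < a + b + j" using c1 c2 c3 cY cardU YU by linarith
    qed
    have eachi: "a + b \<le> k + card (Q - A i)" if i: "i \<in> I" for i
    proof -
      have finAi: "finite (A i)" using AU i finU finite_subset by blast
      have "card (A i) = card (A i \<inter> Y) + card (A i - Y)" using finAi by (metis card_Int_Diff)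
      moreover have "A i \<inter> Y = Y \<inter> A i" by blast
      ultimately have k1: "card (A i - Y) \<le> k" using tY cardA i by fastforce
      have "A i - Y = (C - Y) \<union> (Q \<inter> A i)" "(C - Y) \<inter> (Q \<inter> A i) = {}"
        unfolding Q_def using CA AU i by blast+
      then have k2: "card (A i - Y) = a + card (Q \<inter> A i)" unfolding a_def
        using finC finQ by (simp add: card_Un_disjoint)
      have k3: "b = card (Q \<inter> A i) + card (Q - A i)" unfolding b_def using finQ by (metis card_Int_Diff)
      show ?thesis using k1 k2 k3 by linarith
    qed
    have sumQ: "(\<Sum>i\<in>I. card (Q - A i)) = b"
    proof -
      have "Q = (\<Union>i\<in>I. Q - A i)" using cov unfolding Q_def by blast
      moreover have "card (\<Union>i\<in>I. Q - A i) = (\<Sum>i\<in>I. card (Q - A i))"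
        using finI finQ uniq unfolding Q_def by (intro card_UN_disjoint) blast+
      ultimately show ?thesis unfolding b_def by simp
    qed
    have "r * (a + b) = (\<Sum>i\<in>I. a + b)" using cardI by simp
    also have "\<dots> \<le> (\<Sum>i\<in>I. k + card (Q - A i))" using eachi by (intro sum_mono) auto
    also have "\<dots> = r * k + b" using cardI sumQ by (simp add: sum.distrib)
    finally have rc: "r * (a + b) \<le> r * k + b" .
    have aC: "a \<le> card C" unfolding a_def using finC by (simp add: card_mono)
    have bD: "b \<le> card (U - C)" unfolding b_def Q_def using finU by (simp add: card_mono)
    have inR: "(a, b) \<in> R" unfolding R_def Rset_def using aC bD rc le2 sf2 by simp
    have "\<phi> Y \<in> B (a, b)"
      unfolding \<phi>_def B_def S_def using dd UG YG
      by (auto simp: a_def b_def d_def Q_def)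
    then show "z \<in> (\<Union>p\<in>R. B p)" using inR Y by blast
  qed
  have finR: "finite R" unfolding R_def by (rule finite_Rset)
  have "card F = card (\<phi> ` F)" using inj by (simp add: card_image)
  also have "\<dots> \<le> card (\<Union>p\<in>R. B p)"
  proof (rule card_mono)
    show "finite (\<Union>p\<in>R. B p)"
    proof (rule finite_UN_I[OF finR])
      fix p assume "p \<in> R"
      have "finite (Pow U \<times> Pow U \<times> Pow G)" using finU finG by simp
      moreover have "B p \<subseteq> Pow U \<times> Pow U \<times> Pow G" unfolding B_def S_def using CU
        by (cases p) auto
      ultimately show "finite (B p)" by (rule finite_subset[rotated])
    qed
  qed (rule img)
  also have "\<dots> \<le> (\<Sum>p\<in>R. card (B p))" using finR by (rule card_UN_le)
  also have "\<dots> = (\<Sum>(a,b)\<in>R. (card C choose a) * (card (U-C) choose b) * (card (G-U) choose (a+b+j-2*k)))"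
  proof (rule sum.cong[OF refl])
    fix p assume "p \<in> R"
    obtain a b where p: "p = (a, b)" by (cases p)
    have finC: "finite C" using CU finU finite_subset by blast
    show "card (B p) = (case p of (a,b) \<Rightarrow> (card C choose a) * (card (U-C) choose b) * (card (G-U) choose (a+b+j-2*k)))"
      unfolding p B_def S_def using finC finU finG
      by (simp add: card_cartesian_product n_subsets)
  qed
  finally show ?thesis unfolding R_def .
qed




lemma binom_step: "(t choose j) * (t - j) = (t choose Suc j) * Suc j"
  using binomial_absorption[of j t] binomial_absorb_comp[of t j] by (simp add: mult.commute)

lemma binom_ratio:
  fixes t a m k :: nat
  assumes "a + m \<le> k" "k \<le> t"
  shows "(t choose a) * (t - k)^m \<le> (t choose (a + m)) * k^m"
  using assms(1)
proof (induction m)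
  case 0 then show ?case by simp
next
  case (Suc m)
  have IH: "(t choose a) * (t - k)^m \<le> (t choose (a + m)) * k^m" using Suc by simp
  have "(t choose a) * (t - k)^Suc m = ((t choose a) * (t - k)^m) * (t - k)" by simp
  also have "\<dots> \<le> ((t choose (a + m)) * k^m) * (t - k)" using IH by (rule mult_right_mono) simp
  also have "\<dots> \<le> ((t choose (a + m)) * k^m) * (t - (a + m))"
    using Suc.prems by (intro mult_left_mono) auto
  also have "\<dots> = ((t choose (a + m)) * (t - (a + m))) * k^m" by (simp add: ac_simps)
  also have "\<dots> = (t choose Suc (a + m)) * Suc (a + m) * k^m" by (simp add: binom_step)
  also have "\<dots> \<le> (t choose Suc (a + m)) * k * k^m" using Suc.prems
    by (intro mult_right_mono mult_left_mono) auto
  finally show ?case by (simp add: algebra_simps)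
qed

lemma choose_le_pow: "(n::nat) choose k \<le> n ^ k"
  by (cases "k \<le> n") (auto simp: binomial_le_pow binomial_eq_0)

lemma term_bound:
  fixes a b j k t r n c N :: nat
  assumes ct: "c \<le> t" and Nn: "N \<le> n^2" and r2: "r \<ge> 2"
    and rc: "r*(a+b) \<le> r*k + b" and le2: "2*k \<le> a+b+j" and jk: "j \<le> k" and kt: "k < t"
    and k1: "k \<ge> 1" and kn: "t - k \<le> k * n^2"
  shows "real ((c choose a) * ((r*k) choose b) * (N choose (a+b+j-2*k)))
     \<le> real (t choose j) * (real r * real k^2 / real (t-k))^b * (real n^2 * real (t-k) / real k)^(a+b-k)"
proof -
  define e where "e = a + b - k"
  define d where "d = a + b + j - 2*k"
  have abk: "a + b = k + e" unfolding e_def using le2 jk by linarith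
  have dk: "d + k = j + e" unfolding d_def e_def using le2 jk by linarith
  have de: "d \<le> e" using dk jk by linarith
  have bre: "r * e \<le> b" using rc abk by (simp add: algebra_simps)
  have b2e: "2 * e \<le> b" using bre r2 by (meson le_trans mult_le_mono1)
  have aj: "a \<le> j" using abk b2e dk by linarith
  define x where "x = j - a"
  have xe: "x + 2*e = b + d" unfolding x_def using aj abk dk b2e by linarith
  have jax: "j = a + x" unfolding x_def using aj by simp
  have n1: "(c choose a) \<le> (t choose a)" using ct by (rule binomial_right_mono)
  have n2: "(t choose a) * (t - k)^x \<le> (t choose j) * k^x"
    using binom_ratio[of a x k t] jax jk kt by simp
  have n3: "((r*k) choose b) \<le> (r*k)^b" by (rule choose_le_pow)
  have n4: "(N choose d) \<le> (n^2)^d" using choose_le_pow[of N d] power_mono[OF Nn, of d] by linarith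
  define K where "K = real k"
  define h where "h = real (t - k)"
  define M where "M = real n ^ 2"
  have Kp: "K > 0" using k1 unfolding K_def by simp
  have hp: "h > 0" using kt unfolding h_def by simp
  have sig: "K * M / h \<ge> 1"
  proof -
    have "real (t - k) \<le> real (k * n^2)" using kn by (simp only: of_nat_le_iff)
    then have "h \<le> K * M" unfolding h_def K_def M_def by simp
    then show ?thesis using hp by simp
  qed
  have r1: "real (t choose a) \<le> real (t choose j) * (K / h)^x"
  proof -
    have "real (t choose a) * h^x \<le> real (t choose j) * K^x"
    proof -
      have "real ((t choose a) * (t - k)^x) \<le> real ((t choose j) * k^x)" using n2 by (simp only: of_nat_le_iff)
      then show ?thesis unfolding K_def h_def by simp
    qed
    then show ?thesis using hp by (simp add: field_simps power_divide)
  qed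
  have "real ((c choose a) * ((r*k) choose b) * (N choose d))
      \<le> real (t choose a) * (real r * K)^b * M^d"
  proof -
    have "real (c choose a) \<le> real (t choose a)" using n1 by simp
    moreover have "real ((r*k) choose b) \<le> (real r * K)^b"
    proof -
      have "real ((r*k) choose b) \<le> real ((r*k)^b)" using n3 by (simp only: of_nat_le_iff)
      then show ?thesis unfolding K_def by simp
    qed
    moreover have "real (N choose d) \<le> M^d"
    proof -
      have "real (N choose d) \<le> real ((n^2)^d)" using n4 by (simp only: of_nat_le_iff)
      then show ?thesis unfolding M_def by simp
    qed
    ultimately show ?thesis by (simp add: mult_mono)
  qed
  also have "\<dots> \<le> real (t choose j) * (K / h)^x * (real r * K)^b * M^d"
  proof -
    have P0: "0 \<le> (real r * K)^b * M^d" using Kp unfolding M_def by simp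
    show ?thesis using mult_right_mono[OF r1 P0] by (simp add: mult.assoc)
  qed
  also have "\<dots> \<le> real (t choose j) * (real r * K^2 / h)^b * (M * h / K)^e"
  proof -
    define q where "q = K / h"
    have qp: "q > 0" unfolding q_def using Kp hp by simp
    have eq1: "(K / h)^x * (real r * K)^b * M^d * q^(2*e) = (real r * K^2 / h)^b * (K * M / h)^d"
    proof -
      have "(K / h)^x * q^(2*e) = q^(b + d)" unfolding q_def using xe by (metis power_add)
      then have "(K / h)^x * (real r * K)^b * M^d * q^(2*e) = q^b * (real r * K)^b * (q^d * M^d)"
        by (simp add: power_add algebra_simps)
      also have "\<dots> = (q * (real r * K))^b * (q * M)^d" by (simp only: power_mult_distrib)
      also have "q * (real r * K) = real r * K^2 / h" unfolding q_def by (simp add: power2_eq_square)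
      also have "q * M = K * M / h" unfolding q_def by simp
      finally show ?thesis .
    qed
    have eq2: "(M * h / K)^e * q^(2*e) = (K * M / h)^e"
    proof -
      have "(M * h / K)^e * q^(2*e) = (M * h / K * q^2)^e"
        by (simp only: power_mult_distrib power_mult[symmetric] mult.commute[of 2 e])
      also have "M * h / K * q^2 = K * M / h" unfolding q_def using Kp hp by (simp add: field_simps power2_eq_square)
      finally show ?thesis .
    qed
    have "(K * M / h)^d \<le> (K * M / h)^e" using power_increasing[OF de sig] .
    then have "(K / h)^x * (real r * K)^b * M^d * q^(2*e) \<le> (real r * K^2 / h)^b * (M * h / K)^e * q^(2*e)"
    proof -
      have P0: "0 \<le> (real r * K^2 / h)^b" using Kp hp by simp
      have "(real r * K^2 / h)^b * (K * M / h)^d \<le> (real r * K^2 / h)^b * (K * M / h)^e"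
        using mult_left_mono[OF \<open>(K * M / h)^d \<le> (K * M / h)^e\<close> P0] .
      then show ?thesis unfolding eq1 mult.assoc[of "(real r * K^2 / h)^b"] eq2 .
    qed
    then have "(K / h)^x * (real r * K)^b * M^d \<le> (real r * K^2 / h)^b * (M * h / K)^e"
      using qp by (simp add: mult_le_cancel_right_pos)
    then show ?thesis by (simp add: mult.assoc mult_left_mono)
  qed
  finally show ?thesis unfolding d_def e_def K_def h_def M_def by simp
qed




lemma asym:
  fixes t k n r :: nat
  assumes r100: "r \<ge> 100" and k1: "k \<ge> 1" and kt: "2*k \<le> t"
    and kp: "real k \<le> real t powr (2/7)" and np: "real n powr 0.99 < real t"
    and tb: "real t \<ge> 2*(2*real r)^100"
  shows "real r * real k^2 / real (t-k) \<le> 2*real r * real t powr (-3/7)"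
    and "real r * real k^2 / real (t-k) \<le> 1"
    and "(real r * real k^2 / real (t-k))^100 * (real n^2 * real (t-k) / real k) \<le> 1/(2*real t^5)"
proof -
  define T where "T = real t"
  define K where "K = real k"
  define \<rho> where "\<rho> = real r * real k^2 / real (t-k)"
  have r1: "2 * real r \<ge> 1" using r100 by simp
  have pow1: "(2*real r)^100 \<ge> 1" using one_le_power[OF r1] .
  have T1: "T \<ge> 2" using tb pow1 unfolding T_def by linarith
  have Tp: "T > 0" using T1 by simp
  have Kp: "K \<ge> 1" using k1 unfolding K_def by simp
  have h: "real (t - k) = T - K" unfolding T_def K_def using kt by (simp add: of_nat_diff)
  have hT: "T - K \<ge> T / 2" using kt unfolding T_def K_def by simp
  have hp: "T - K > 0" using hT Tp by simp
  have K2: "K^2 \<le> T powr (4/7)"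
  proof -
    have "K^2 \<le> (T powr (2/7))^2" using kp Kp unfolding K_def T_def by (intro power_mono) auto
    also have "\<dots> = T powr (4/7)" using Tp by (simp add: powr_power)
    finally show ?thesis .
  qed
  have rho1: "\<rho> \<le> 2*real r * T powr (-3/7)"
  proof -
    have "\<rho> = real r * K^2 / (T - K)" unfolding \<rho>_def K_def h ..
    also have "\<dots> \<le> real r * K^2 / (T / 2)"
      using hT hp Tp by (intro divide_left_mono) auto
    also have "\<dots> \<le> real r * T powr (4/7) / (T / 2)"
      using K2 Tp by (intro divide_right_mono mult_left_mono) auto
    also have "\<dots> = 2 * real r * (T powr (4/7) / T powr 1)" using Tp by simp
    also have "T powr (4/7) / T powr 1 = T powr (-3/7)"
      using powr_diff[of T "4/7" 1] by simp
    finally show ?thesis by simp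
  qed
  then show "real r * real k^2 / real (t-k) \<le> 2*real r * real t powr (-3/7)" unfolding \<rho>_def T_def .
  have rhop: "\<rho> \<ge> 0" unfolding \<rho>_def by simp
  have rr3: "(2*real r)^3 \<le> T"
  proof -
    have "(2*real r)^3 \<le> (2*real r)^100" using power_increasing[of 3 100 "2*real r"] r1 by linarith
    then show ?thesis using tb pow1 unfolding T_def by linarith
  qed
  have rle: "2 * real r \<le> T powr (3/7)"
  proof -
    have e1: "(2*real r)^3 = (2*real r) powr (real 3)" using r1 powr_realpow[of "2*real r" 3] by linarith
    have "((2*real r) powr (real 3)) powr (1/3) = (2*real r) powr (real 3 * (1/3))" by (rule powr_powr)
    also have "\<dots> = 2 * real r" using r1 by simp
    finally have "2 * real r = ((2*real r)^3) powr (1/3)" using e1 by simp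
    also have "\<dots> \<le> T powr (1/3)" using rr3 r1 by (intro powr_mono2) auto
    also have "\<dots> \<le> T powr (3/7)" using T1 by (intro powr_mono) auto
    finally show ?thesis .
  qed
  have "2*real r * T powr (-3/7) \<le> 1"
  proof -
    have "2*real r * T powr (-3/7) \<le> T powr (3/7) * T powr (-3/7)"
      using rle by (intro mult_right_mono) auto
    also have "\<dots> = T powr (3/7 + -3/7)" by (simp only: powr_add)
    also have "\<dots> = 1" using Tp by simp
    finally show ?thesis .
  qed
  from order_trans[OF rho1 this] have rho_le1: "\<rho> \<le> 1" .
  then show "real r * real k^2 / real (t-k) \<le> 1" unfolding \<rho>_def .
  have nb: "real n \<le> T powr (100/99)"
  proof -
    have "real n = (real n powr 0.99) powr (100/99)" by (simp add: powr_powr)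
    also have "\<dots> \<le> T powr (100/99)" using np unfolding T_def by (intro powr_mono2) auto
    finally show ?thesis .
  qed
  have n2: "real n^2 \<le> T powr (200/99)"
  proof -
    have "real n^2 \<le> (T powr (100/99))^2" using nb by (intro power_mono) auto
    also have "\<dots> = T powr (200/99)" using Tp by (simp add: powr_power)
    finally show ?thesis .
  qed
  have kap: "real n^2 * real (t-k) / real k \<le> T powr (200/99) * T"
  proof -
    have "real n^2 * real (t-k) / real k \<le> real n^2 * real (t-k)"
    proof -
      have "0 \<le> real n^2 * real (t-k)" by simp
      then have "real n^2 * real (t-k) / K \<le> real n^2 * real (t-k) / 1"
        using Kp by (intro divide_left_mono) auto
      then show ?thesis unfolding K_def by simp
    qed
    also have "\<dots> \<le> T powr (200/99) * T"
      using n2 h hp Kp Tp by (intro mult_mono) auto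
    finally show ?thesis .
  qed
  have rho100: "\<rho>^100 \<le> (2*real r)^100 * T powr (-300/7)"
  proof -
    have "\<rho>^100 \<le> (2*real r * T powr (-3/7))^100" using rho1 rhop by (intro power_mono) auto
    also have "\<dots> = (2*real r)^100 * (T powr (-3/7))^100" by (simp add: power_mult_distrib)
    also have "(T powr (-3/7))^100 = T powr (-300/7)" using Tp by (simp add: powr_power)
    finally show ?thesis .
  qed
  have "\<rho>^100 * (real n^2 * real (t-k) / real k) \<le> (2*real r)^100 * T powr (-300/7) * (T powr (200/99) * T)"
    using rho100 kap by (intro mult_mono) auto
  also have "\<dots> = (2*real r)^100 * T powr (-300/7 + 200/99 + 1)"
  proof -
    have "T powr (-300/7) * (T powr (200/99) * T) = T powr (-300/7) * (T powr (200/99) * T powr 1)"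
      using Tp by simp
    also have "\<dots> = T powr (-300/7 + 200/99 + 1)" by (simp only: powr_add mult.assoc)
    finally show ?thesis by (simp only: mult.assoc)
  qed
  also have "\<dots> \<le> (T / 2) * T powr (-39)"
  proof (intro mult_mono)
    show "(2*real r)^100 \<le> T / 2" using tb unfolding T_def by simp
    show "T powr (-300/7 + 200/99 + 1) \<le> T powr (-39)" using T1 by (intro powr_mono) auto
  qed (use Tp in auto)
  also have "\<dots> = T powr (-38) / 2"
  proof -
    have "T * T powr (-39) = T powr 1 * T powr (-39)" using Tp by simp
    also have "\<dots> = T powr (1 + -39)" by (simp only: powr_add)
    also have "\<dots> = T powr (-38)" by simp
    finally show ?thesis by simp
  qed
  also have "\<dots> \<le> T powr (-5) / 2" using T1 by (intro divide_right_mono powr_mono) auto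
  also have "\<dots> = 1 / (2 * T^5)"
  proof -
    have p5: "T powr (real 5) = T^5" using powr_realpow[of T 5] Tp by blast
    have "T powr (-5) = 1 / T powr 5" by (rule powr_minus_divide)
    also have "T powr 5 = T^5" using p5 by simp
    finally show ?thesis by simp
  qed
  finally show "(real r * real k^2 / real (t-k))^100 * (real n^2 * real (t-k) / real k) \<le> 1/(2*real t^5)"
    unfolding \<rho>_def T_def .
qed




lemma main_setup:
  fixes n t q k r j :: nat and S :: "pperm set" and T :: "nat \<Rightarrow> pperm set" and A :: "nat \<Rightarrow> pperm"
    and F :: "pperm set"
  assumes r100: "r \<ge> 100" and tn: "t < n"
    and Sp: "\<forall>P\<in>S. partial_perm n P \<and> card P \<le> q" and St: "t_intersecting t S"
    and pe: "peeling t q S T" and k1: "1 \<le> k" and kq: "k \<le> q - t"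
    and AW: "\<forall>i\<in>{1..r}. A i \<in> Wfam t T k"
    and Ceq: "int (card (\<Inter>i\<in>{1..r}. A i)) = int t - (int r - 2) * int k"
    and Fp: "\<forall>Y\<in>F. Y \<in> T k \<and> card Y = t + j \<and> (sf \<longrightarrow> \<not> Y \<subseteq> (\<Union>i\<in>{1..r}. A i))"
  shows "98 * k \<le> t" "card (\<Inter>i\<in>{1..r}. A i) \<le> t"
    "card ((\<Union>i\<in>{1..r}. A i) - (\<Inter>i\<in>{1..r}. A i)) = r * k"
    "card (({1..n} \<times> {1..n}) - (\<Union>i\<in>{1..r}. A i)) \<le> n^2"
    "card F \<le> (\<Sum>(a,b)\<in>Rset (card (\<Inter>i\<in>{1..r}. A i)) (r*k) r k j sf.
        (card (\<Inter>i\<in>{1..r}. A i) choose a) * ((r*k) choose b) *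
        (card (({1..n} \<times> {1..n}) - (\<Union>i\<in>{1..r}. A i)) choose (a+b+j-2*k)))"
proof -
  define W where "W = ({1..n} \<times> {1..n} :: pperm)"
  define I where "I = {1..r}"
  define U where "U = (\<Union>i\<in>{1..r}. A i)"
  define C where "C = (\<Inter>i\<in>{1..r}. A i)"
  have finW: "finite W" unfolding W_def by simp
  have SW: "\<forall>X\<in>S. X \<subseteq> W" using Sp partial_perm_sub unfolding W_def by blast
  have inv: "t_intersecting t (T k) \<and> (\<forall>X\<in>T k. X \<subseteq> W)"
    using peeling_inv[OF pe St SW kq] .
  have AT: "\<forall>i\<in>I. A i \<in> T k" and cardA: "\<forall>i\<in>I. card (A i) = t + k"
    using AW unfolding Wfam_def I_def by auto
  have AWs: "\<forall>i\<in>I. A i \<subseteq> W" using AT inv by blast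
  have finA: "\<forall>i\<in>I. finite (A i)" using AWs finW finite_subset by blast
  have pair: "\<forall>i\<in>I. \<forall>l\<in>I. t \<le> card (A i \<inter> A l)" using AT inv unfolding t_intersecting_def by blast
  have finI: "finite I" and cardI: "card I = r" unfolding I_def by auto
  have r2: "2 \<le> r" using r100 by simp
  have cardC: "card C + (r - 2) * k = t"
  proof -
    have "int (r - 2) = int r - 2" using r2 by simp
    then have "int (card C + (r - 2) * k) = int t" using Ceq unfolding C_def by simp
    then show ?thesis by (simp only: of_nat_eq_iff)
  qed
  show "98 * k \<le> t"
  proof -
    have "98 * k \<le> (r - 2) * k" using r100 by (intro mult_right_mono) auto
    then show ?thesis using cardC by linarith
  qed
  have "card C \<le> t" using cardC by linarith
  then show "card (\<Inter>i\<in>{1..r}. A i) \<le> t" unfolding C_def .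
  have Cdef: "C = (\<Inter>i\<in>I. A i)" unfolding C_def I_def ..
  have S2: "card ((\<Union>i\<in>I. A i) - C) = r * k"
    using structure_S2[OF finI cardI r2 finA cardA pair Cdef cardC] .
  then show "card ((\<Union>i\<in>{1..r}. A i) - (\<Inter>i\<in>{1..r}. A i)) = r * k" unfolding I_def C_def .
  have UW: "U \<subseteq> W" using AWs unfolding U_def I_def by blast
  have one: "1 \<in> {1..r}" using r2 by simp
  have CU: "C \<subseteq> U" unfolding C_def U_def using one by blast
  show "card (({1..n} \<times> {1..n}) - (\<Union>i\<in>{1..r}. A i)) \<le> n^2"
  proof -
    have "card (W - U) \<le> card W" using finW by (simp add: card_mono)
    also have "card W = n^2" unfolding W_def by (simp add: card_cartesian_product power2_eq_square)
    finally show ?thesis unfolding W_def U_def .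
  qed
  have finU: "finite U" using UW finW finite_subset by blast
  have cardU: "card U = t + 2 * k"
  proof -
    have "card U = card C + card (U - C)" using CU finU
      by (metis add.commute card_Diff_subset card_mono finite_subset le_add_diff_inverse)
    also have "card (U - C) = r * k" using S2 unfolding U_def I_def .
    finally have "card U = card C + r * k" .
    moreover have "(r - 2) * k + 2 * k = r * k" using r2 by (metis add_mult_distrib le_add_diff_inverse2)
    ultimately show ?thesis using cardC by linarith
  qed
  have AU: "\<forall>i\<in>I. A i \<subseteq> U" unfolding U_def I_def by blast
  have CA: "\<forall>i\<in>I. C \<subseteq> A i" unfolding C_def I_def by blast
  have cov: "\<forall>x\<in>U-C. \<exists>i\<in>I. x \<notin> A i" unfolding U_def C_def I_def by blast
  have uniq: "\<forall>x\<in>U-C. \<forall>p\<in>I. \<forall>q\<in>I. x \<notin> A p \<longrightarrow> x \<notin> A q \<longrightarrow> p = q"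
    using structure_S1[OF finI cardI finA cardA pair Cdef cardC] unfolding U_def I_def by blast
  have Fsub: "\<forall>Y\<in>F. Y \<subseteq> W \<and> card Y = t + j \<and> (\<forall>i\<in>I. t \<le> card (Y \<inter> A i)) \<and> (sf \<longrightarrow> \<not> Y \<subseteq> U)"
    using Fp inv AT unfolding t_intersecting_def U_def by blast
  have "card F \<le> (\<Sum>(a,b)\<in>Rset (card C) (card (U-C)) r k j sf.
            (card C choose a) * (card (U-C) choose b) * (card (W-U) choose (a+b+j-2*k)))"
    using count_fam[OF finW UW CU finI cardI AU CA cardA cov uniq cardU Fsub] .
  then show "card F \<le> (\<Sum>(a,b)\<in>Rset (card (\<Inter>i\<in>{1..r}. A i)) (r*k) r k j sf.
        (card (\<Inter>i\<in>{1..r}. A i) choose a) * ((r*k) choose b) *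
        (card (({1..n} \<times> {1..n}) - (\<Union>i\<in>{1..r}. A i)) choose (a+b+j-2*k)))"
    using S2 unfolding C_def U_def W_def I_def by simp
qed




lemma term_theta:
  fixes a b j k t r n c N :: nat
  assumes ab: "(a, b) \<in> Rset c (r*k) r k j sf"
    and ct: "c \<le> t" and Nn: "N \<le> n^2" and r100: "r \<ge> 100"
    and jk: "j \<le> k" and kt: "k < t" and k1: "k \<ge> 1" and kn: "t - k \<le> k * n^2"
    and rho1: "real r * real k^2 / real (t-k) \<le> 1"
  shows "real ((c choose a) * ((r*k) choose b) * (N choose (a+b+j-2*k)))
     \<le> real (t choose j) * ((real r * real k^2 / real (t-k))^100 * (real n^2 * real (t-k) / real k))^(a+b-k)"
proof -
  define \<rho> where "\<rho> = real r * real k^2 / real (t-k)"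
  define \<kappa> where "\<kappa> = real n^2 * real (t-k) / real k"
  have rc: "r*(a+b) \<le> r*k + b" and le2: "2*k \<le> a+b+j" using ab unfolding Rset_def by auto
  have tb: "real ((c choose a) * ((r*k) choose b) * (N choose (a+b+j-2*k))) \<le> real (t choose j) * \<rho>^b * \<kappa>^(a+b-k)"
    unfolding \<rho>_def \<kappa>_def using term_bound[OF ct Nn _ rc le2 jk kt k1 kn] r100 by simp
  define e where "e = a + b - k"
  have abk: "a + b = k + e" unfolding e_def using le2 jk by linarith
  have bre: "r * e \<le> b" using rc abk by (simp add: algebra_simps)
  have b100: "100 * e \<le> b" using bre r100 by (meson le_trans mult_le_mono1)
  have rp: "0 \<le> \<rho>" unfolding \<rho>_def by simp
  have kp: "0 \<le> \<kappa>" unfolding \<kappa>_def by simp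
  have "\<rho>^b \<le> \<rho>^(100*e)" using power_decreasing[OF b100 rp] rho1 unfolding \<rho>_def by simp
  then have "\<rho>^b * \<kappa>^e \<le> \<rho>^(100*e) * \<kappa>^e" using kp by (simp add: mult_right_mono)
  also have "\<dots> = (\<rho>^100 * \<kappa>)^e" by (simp add: power_mult power_mult_distrib)
  finally have "real (t choose j) * \<rho>^b * \<kappa>^e \<le> real (t choose j) * (\<rho>^100 * \<kappa>)^e"
    by (simp add: mult.assoc mult_left_mono)
  then show ?thesis using tb unfolding e_def \<rho>_def \<kappa>_def by linarith
qed

lemma card_Rset: "card (Rset cC cD r k j sf) \<le> (cC + 1) * (cD + 1)"
proof -
  have "Rset cC cD r k j sf \<subseteq> {0..cC} \<times> {0..cD}" unfolding Rset_def by auto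
  then have "card (Rset cC cD r k j sf) \<le> card ({0..cC} \<times> {0..cD})" by (intro card_mono) auto
  then show ?thesis by (simp add: card_cartesian_product)
qed

lemma main_bound:
  fixes t k n r c N j :: nat and T \<theta> :: real
  assumes ct: "c \<le> t" and Nn: "N \<le> n^2" and r100: "r \<ge> 100"
    and jk: "j \<le> k" and kt: "k < t" and k1: "k \<ge> 1" and kn: "t - k \<le> k * n^2"
    and rho1: "real r * real k^2 / real (t-k) \<le> 1"
    and th: "(real r * real k^2 / real (t-k))^100 * (real n^2 * real (t-k) / real k) \<le> 1/(2*real t^5)"
    and e1: "j < k \<or> sf"
  shows "real (\<Sum>(a,b)\<in>Rset c (r*k) r k j sf. (c choose a) * ((r*k) choose b) * (N choose (a+b+j-2*k)))
     \<le> real (card (Rset c (r*k) r k j sf)) * (real (t choose j) * (1 / real t^5) * (1/2)^(k-j))"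
proof -
  define \<theta> where "\<theta> = (real r * real k^2 / real (t-k))^100 * (real n^2 * real (t-k) / real k)"
  have thp: "0 \<le> \<theta>" unfolding \<theta>_def by simp
  have tp: "real t \<ge> 1" using kt by simp
  have "real (\<Sum>(a,b)\<in>Rset c (r*k) r k j sf. (c choose a) * ((r*k) choose b) * (N choose (a+b+j-2*k)))
      = (\<Sum>p\<in>Rset c (r*k) r k j sf. real (case p of (a,b) \<Rightarrow> (c choose a) * ((r*k) choose b) * (N choose (a+b+j-2*k))))"
    by (simp add: of_nat_sum)
  also have "\<dots> \<le> (\<Sum>p\<in>Rset c (r*k) r k j sf. real (t choose j) * (1 / real t^5) * (1/2)^(k-j))"
  proof (rule sum_mono)
    fix p assume pR: "p \<in> Rset c (r*k) r k j sf"
    obtain a b where p: "p = (a, b)" by (cases p)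
    have ab: "(a, b) \<in> Rset c (r*k) r k j sf" using pR p by simp
    have le2: "2*k \<le> a+b+j" and sfc: "sf \<longrightarrow> 2*k < a+b+j" using ab unfolding Rset_def by auto
    define e where "e = a + b - k"
    have e1': "e \<ge> 1" and ekj: "k - j \<le> e" using le2 sfc e1 jk unfolding e_def by auto
    have "real ((c choose a) * ((r*k) choose b) * (N choose (a+b+j-2*k))) \<le> real (t choose j) * \<theta>^e"
      using term_theta[OF ab ct Nn r100 jk kt k1 kn rho1] unfolding \<theta>_def e_def .
    also have "\<theta>^e \<le> (1/(2*real t^5))^e" using th thp unfolding \<theta>_def by (intro power_mono) auto
    also have "(1/(2*real t^5))^e = (1/2)^e * (1/real t^5)^e" by (simp add: power_mult_distrib[symmetric])
    also have "\<dots> \<le> (1/2)^(k-j) * (1/real t^5)"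
    proof (rule mult_mono)
      show "(1/2::real)^e \<le> (1/2)^(k-j)" using ekj by (intro power_decreasing) auto
      have "(1/real t^5)^e \<le> (1/real t^5)^1" using e1' tp by (intro power_decreasing) auto
      then show "(1/real t^5)^e \<le> 1/real t^5" by simp
    qed auto
    finally have "real ((c choose a) * ((r*k) choose b) * (N choose (a+b+j-2*k)))
        \<le> real (t choose j) * ((1/2)^(k-j) * (1/real t^5))" by (simp add: mult_left_mono)
    then show "real (case p of (a,b) \<Rightarrow> (c choose a) * ((r*k) choose b) * (N choose (a+b+j-2*k)))
        \<le> real (t choose j) * (1 / real t^5) * (1/2)^(k-j)" unfolding p by (simp add: ac_simps)
  qed
  also have "\<dots> = real (card (Rset c (r*k) r k j sf)) * (real (t choose j) * (1 / real t^5) * (1/2)^(k-j))"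
    by simp
  finally show ?thesis .
qed

lemma sum_rho: assumes "0 \<le> (\<rho>::real)" "\<rho> \<le> 1" shows "(\<Sum>b\<in>{0..k}. \<rho>^b) \<le> 1 + real k * \<rho>"
proof (induction k)
  case 0 then show ?case by simp
next
  case (Suc k)
  have "\<rho>^Suc k \<le> \<rho>^1" using assms by (intro power_decreasing) auto
  then show ?case using Suc by (simp add: algebra_simps)
qed

lemma main_bound0:
  fixes t k n r c N :: nat
  assumes ct: "c \<le> t" and Nn: "N \<le> n^2" and r100: "r \<ge> 100"
    and kt: "k < t" and k1: "k \<ge> 1" and kn: "t - k \<le> k * n^2"
    and rho1: "real r * real k^2 / real (t-k) \<le> 1"
  shows "real (\<Sum>(a,b)\<in>Rset c (r*k) r k k False - Rset c (r*k) r k k True. (c choose a) * ((r*k) choose b) * (N choose (a+b+k-2*k)))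
     \<le> real (t choose k) * (1 + real k * (real r * real k^2 / real (t-k)))"
proof -
  define \<rho> where "\<rho> = real r * real k^2 / real (t-k)"
  define R0 where "R0 = Rset c (r*k) r k k False - Rset c (r*k) r k k True"
  have rp: "0 \<le> \<rho>" unfolding \<rho>_def by simp
  have R0sub: "R0 \<subseteq> (\<lambda>b. (k - b, b)) ` {0..k}"
  proof
    fix p assume pR0: "p \<in> R0"
    obtain a b where p: "p = (a,b)" by (cases p)
    have h1: "2*k \<le> a+b+k" and h2: "\<not> 2*k < a+b+k" using pR0 p unfolding R0_def Rset_def by auto
    then have abk: "a + b = k" by linarith
    then show "p \<in> (\<lambda>b. (k - b, b)) ` {0..k}" using p by (intro image_eqI[of _ _ b]) auto
  qed
  have "real (\<Sum>(a,b)\<in>R0. (c choose a) * ((r*k) choose b) * (N choose (a+b+k-2*k)))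
      = (\<Sum>p\<in>R0. real (case p of (a,b) \<Rightarrow> (c choose a) * ((r*k) choose b) * (N choose (a+b+k-2*k))))"
    by (simp add: of_nat_sum)
  also have "\<dots> \<le> (\<Sum>p\<in>R0. real (t choose k) * \<rho>^(snd p))"
  proof (rule sum_mono)
    fix p assume pR: "p \<in> R0"
    obtain a b where p: "p = (a, b)" by (cases p)
    have ab: "(a, b) \<in> Rset c (r*k) r k k False" and abk: "a + b = k" using pR p unfolding R0_def Rset_def by auto
    have "real ((c choose a) * ((r*k) choose b) * (N choose (a+b+k-2*k)))
        \<le> real (t choose k) * \<rho>^b * (real n^2 * real (t-k) / real k)^(a+b-k)"
      unfolding \<rho>_def using term_bound[OF ct Nn _ _ _ le_refl kt k1 kn] ab r100 unfolding Rset_def by auto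
    then show "real (case p of (a,b) \<Rightarrow> (c choose a) * ((r*k) choose b) * (N choose (a+b+k-2*k)))
        \<le> real (t choose k) * \<rho>^(snd p)" using abk p by simp
  qed
  also have "\<dots> \<le> (\<Sum>p\<in>(\<lambda>b. (k - b, b)) ` {0..k}. real (t choose k) * \<rho>^(snd p))"
    using R0sub rp by (intro sum_mono2) auto
  also have "\<dots> = (\<Sum>b\<in>{0..k}. real (t choose k) * \<rho>^b)"
    by (subst sum.reindex) (auto simp: inj_on_def)
  also have "\<dots> = real (t choose k) * (\<Sum>b\<in>{0..k}. \<rho>^b)" by (simp add: sum_distrib_left)
  also have "\<dots> \<le> real (t choose k) * (1 + real k * \<rho>)"
    using sum_rho[OF rp rho1[folded \<rho>_def]] by (intro mult_left_mono) auto
  finally show ?thesis unfolding R0_def \<rho>_def .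
qed




lemma common_facts:
  fixes n t k r :: nat and \<epsilon> :: real
  assumes r100: "r \<ge> 100" and eps: "\<epsilon> > 0" and np: "real n powr 0.99 < real t" and tn: "t < n"
    and k1: "1 \<le> k" and k98: "98 * k \<le> t" and kp: "real k \<le> real t powr (2/7 - \<epsilon>/2)"
    and tb: "real t \<ge> 2*(2*real r)^100"
  shows "k < t" "t - k \<le> k * n^2" "real k \<le> real t powr (2/7)"
    "real r * real k^2 / real (t-k) \<le> 2*real r * real t powr (-3/7)"
    "real r * real k^2 / real (t-k) \<le> 1"
    "(real r * real k^2 / real (t-k))^100 * (real n^2 * real (t-k) / real k) \<le> 1/(2*real t^5)"
proof -
  show kt: "k < t" using k1 k98 by linarith
  have "t \<le> n * n" using tn by (metis less_imp_le_nat le_square le_trans)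
  also have "n * n \<le> k * n^2" using k1 by (simp add: power2_eq_square)
  finally show "t - k \<le> k * n^2" by linarith
  have T1: "real t \<ge> 1" using kt by simp
  have "real t powr (2/7 - \<epsilon>/2) \<le> real t powr (2/7)" using T1 eps by (intro powr_mono) auto
  then show kp2: "real k \<le> real t powr (2/7)" using kp by linarith
  have k2: "2 * k \<le> t" using k98 by linarith
  show "real r * real k^2 / real (t-k) \<le> 2*real r * real t powr (-3/7)"
    "real r * real k^2 / real (t-k) \<le> 1"
    "(real r * real k^2 / real (t-k))^100 * (real n^2 * real (t-k) / real k) \<le> 1/(2*real t^5)"
    using asym[OF r100 k1 k2 kp2 np tb] by auto
qed

lemma cardR_bound:
  assumes "c \<le> t" "t \<ge> 1" "k \<le> t" "r \<ge> 1"
  shows "card (Rset c (r*k) r k j sf) \<le> 4 * r * t^2"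
proof -
  have "card (Rset c (r*k) r k j sf) \<le> (c + 1) * (r*k + 1)" by (rule card_Rset)
  also have "\<dots> \<le> (2*t) * (2*r*t)"
  proof (rule mult_mono)
    show "c + 1 \<le> 2 * t" using assms by linarith
    have "r * k \<le> r * t" using assms by simp
    moreover have "1 \<le> r * t" using assms by simp
    ultimately show "r * k + 1 \<le> 2 * r * t" by linarith
  qed auto
  also have "\<dots> = 4 * r * t^2" by (simp add: power2_eq_square)
  finally show ?thesis .
qed

lemma partA_core:
  fixes \<epsilon> :: real and r n t q k j :: nat and S :: "pperm set" and T :: "nat \<Rightarrow> pperm set" and A :: "nat \<Rightarrow> pperm"
  assumes r100: "r \<ge> 100" and eps: "\<epsilon> > 0"
    and np: "real n powr 0.99 < real t" and tn: "t < n"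
    and Sp: "\<forall>P\<in>S. partial_perm n P \<and> card P \<le> q" and St: "t_intersecting t S"
    and pe: "peeling t q S T" and k1: "1 \<le> k" and kq: "k \<le> q - t"
    and kp: "real k \<le> real t powr (2/7 - \<epsilon>/2)"
    and AW: "\<forall>i\<in>{1..r}. A i \<in> Wfam t T k"
    and Ceq: "int (card (\<Inter>i\<in>{1..r}. A i)) = int t - (int r - 2) * int k"
    and tb: "real t > 2*(2*real r)^100 + 4*real r" and jk: "j < k"
  shows "real (card {X \<in> T k. card X = t + j})
                    \<le> real t powr (-0.1) * 2 powr (real j - real k) * real (t choose j)"
proof -
  define F where "F = {X \<in> T k. card X = t + j}"
  define c where "c = card (\<Inter>i\<in>{1..r}. A i)"
  define N where "N = card (({1..n} \<times> {1..n}) - (\<Union>i\<in>{1..r}. A i))"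
  have Fp: "\<forall>Y\<in>F. Y \<in> T k \<and> card Y = t + j \<and> (False \<longrightarrow> \<not> Y \<subseteq> (\<Union>i\<in>{1..r}. A i))"
    unfolding F_def by auto
  note ms = main_setup[OF r100 tn Sp St pe k1 kq AW Ceq Fp]
  have k98: "98 * k \<le> t" using ms(1) .
  have ct: "c \<le> t" using ms(2) unfolding c_def .
  have Nn: "N \<le> n^2" using ms(4) unfolding N_def .
  have cnt: "card F \<le> (\<Sum>(a,b)\<in>Rset c (r*k) r k j False. (c choose a) * ((r*k) choose b) * (N choose (a+b+j-2*k)))"
    using ms(5) unfolding c_def N_def .
  have tb0: "real t \<ge> 2*(2*real r)^100" using tb by simp
  note cf = common_facts[OF r100 eps np tn k1 k98 kp tb0]
  have mb: "real (\<Sum>(a,b)\<in>Rset c (r*k) r k j False. (c choose a) * ((r*k) choose b) * (N choose (a+b+j-2*k)))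
     \<le> real (card (Rset c (r*k) r k j False)) * (real (t choose j) * (1 / real t^5) * (1/2)^(k-j))"
    using main_bound[OF ct Nn r100 _ cf(1) k1 cf(2) cf(5) cf(6)] jk by simp
  have t1: "t \<ge> 1" using cf(1) by simp
  have cR: "card (Rset c (r*k) r k j False) \<le> 4 * r * t^2"
    using cardR_bound[OF ct t1] cf(1) r100 by simp
  define X where "X = real (t choose j) * (1/2)^(k-j)"
  have Xp: "X \<ge> 0" unfolding X_def by simp
  have Tp: "real t > 0" using t1 by simp
  have "real (card F) \<le> real (card (Rset c (r*k) r k j False)) * (real (t choose j) * (1 / real t^5) * (1/2)^(k-j))"
    using cnt mb by (meson of_nat_le_iff order_trans)
  also have "\<dots> \<le> real (4 * r * t^2) * (real (t choose j) * (1 / real t^5) * (1/2)^(k-j))"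
  proof (rule mult_right_mono)
    show "real (card (Rset c (r*k) r k j False)) \<le> real (4 * r * t^2)" using cR by (simp only: of_nat_le_iff)
  qed simp
  also have "\<dots> = X * (4 * real r / real t^3)"
    unfolding X_def using Tp by (simp add: field_simps power_add[symmetric] eval_nat_numeral)
  also have "\<dots> \<le> X * (1 / real t^2)"
  proof (rule mult_left_mono[OF _ Xp])
    have z: "0 \<le> (2*real r)^100" by simp
    have "4 * real r \<le> real t" using tb z by linarith
    then have "4 * real r / real t^3 \<le> real t / real t^3" using Tp by (intro divide_right_mono) auto
    also have "\<dots> = 1 / real t^2" using Tp by (simp add: eval_nat_numeral field_simps)
    finally show "4 * real r / real t^3 \<le> 1 / real t^2" .
  qed
  also have "\<dots> \<le> X * real t powr (-0.1)"
  proof (rule mult_left_mono[OF _ Xp])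
    have p2: "real t powr (real 2) = real t^2" using powr_realpow[of "real t" 2] Tp by blast
    have "real t powr (-2) = 1 / real t powr 2" by (rule powr_minus_divide)
    also have "real t powr 2 = real t^2" using p2 by simp
    finally have "1 / real t^2 = real t powr (-2)" by simp
    also have "\<dots> \<le> real t powr (-0.1)" using t1 by (intro powr_mono) auto
    finally show "1 / real t^2 \<le> real t powr (-0.1)" .
  qed
  also have "\<dots> = real t powr (-0.1) * 2 powr (real j - real k) * real (t choose j)"
  proof -
    have "2 powr (real j - real k) = 2 powr (- real (k - j))" using jk by (simp add: of_nat_diff)
    also have "\<dots> = 1 / 2 powr (real (k - j))" by (simp add: powr_minus_divide)
    also have "2 powr (real (k - j)) = (2::real)^(k-j)" by (rule powr_realpow) simp
    also have "1 / (2::real)^(k-j) = (1/2)^(k-j)" by (simp add: power_one_over)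
    finally show ?thesis unfolding X_def by simp
  qed
  finally show ?thesis unfolding F_def .
qed

lemma partB_core:
  fixes \<epsilon> \<eta> :: real and r n t q k :: nat and S :: "pperm set" and T :: "nat \<Rightarrow> pperm set" and A :: "nat \<Rightarrow> pperm"
  assumes r100: "r \<ge> 100" and eps: "\<epsilon> > 0" and eta: "\<eta> > 0"
    and np: "real n powr 0.99 < real t" and tn: "t < n"
    and Sp: "\<forall>P\<in>S. partial_perm n P \<and> card P \<le> q" and St: "t_intersecting t S"
    and pe: "peeling t q S T" and k1: "1 \<le> k" and kq: "k \<le> q - t"
    and kp: "real k \<le> real t powr (2/7 - \<epsilon>/2)"
    and AW: "\<forall>i\<in>{1..r}. A i \<in> Wfam t T k"
    and Ceq: "int (card (\<Inter>i\<in>{1..r}. A i)) = int t - (int r - 2) * int k"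
    and tb: "real t > 2*(2*real r)^100 + 8*real r/\<eta> + (4*real r/\<eta>)^7"
  shows "real (card (Wfam t T k)) \<le> (1 + \<eta>) * real (t choose k) \<and>
          real (card {X \<in> Wfam t T k. \<not> X \<subseteq> (\<Union>i\<in>{1..r}. A i)}) \<le> \<eta> * real (t choose k)"
proof -
  define F0 where "F0 = Wfam t T k"
  define F1 where "F1 = {X \<in> Wfam t T k. \<not> X \<subseteq> (\<Union>i\<in>{1..r}. A i)}"
  define c where "c = card (\<Inter>i\<in>{1..r}. A i)"
  define N where "N = card (({1..n} \<times> {1..n}) - (\<Union>i\<in>{1..r}. A i))"
  define f where "f = (\<lambda>(a,b). (c choose a) * ((r*k) choose b) * (N choose (a+b+k-2*k)))"
  define R0 where "R0 = Rset c (r*k) r k k False"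
  define R1 where "R1 = Rset c (r*k) r k k True"
  have Fp0: "\<forall>Y\<in>F0. Y \<in> T k \<and> card Y = t + k \<and> (False \<longrightarrow> \<not> Y \<subseteq> (\<Union>i\<in>{1..r}. A i))"
    unfolding F0_def Wfam_def by auto
  have Fp1: "\<forall>Y\<in>F1. Y \<in> T k \<and> card Y = t + k \<and> (True \<longrightarrow> \<not> Y \<subseteq> (\<Union>i\<in>{1..r}. A i))"
    unfolding F1_def Wfam_def by auto
  note ms0 = main_setup[OF r100 tn Sp St pe k1 kq AW Ceq Fp0]
  note ms1 = main_setup[OF r100 tn Sp St pe k1 kq AW Ceq Fp1]
  have k98: "98 * k \<le> t" using ms0(1) .
  have ct: "c \<le> t" using ms0(2) unfolding c_def .
  have Nn: "N \<le> n^2" using ms0(4) unfolding N_def .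
  have cnt0: "card F0 \<le> sum f R0" using ms0(5) unfolding c_def N_def f_def R0_def .
  have cnt1: "card F1 \<le> sum f R1" using ms1(5) unfolding c_def N_def f_def R1_def .
  have z: "0 \<le> (2*real r)^100" by simp
  have z2: "0 \<le> (4*real r/\<eta>)^7" using eta by simp
  have z3: "0 \<le> 8*real r/\<eta>" using eta by simp
  have tb0: "real t \<ge> 2*(2*real r)^100" using tb z2 z3 by linarith
  note cf = common_facts[OF r100 eps np tn k1 k98 kp tb0]
  have t1: "t \<ge> 1" using cf(1) by simp
  have Tp: "real t > 0" using t1 by simp
  define C where "C = real (t choose k)"
  have Cp: "C \<ge> 0" unfolding C_def by simp
  have mb1: "real (sum f R1) \<le> real (card R1) * (C * (1 / real t^5) * (1/2)^(k-k))"
    using main_bound[OF ct Nn r100 le_refl cf(1) k1 cf(2) cf(5) cf(6), of True] unfolding f_def R1_def C_def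
    by simp
  have cR1: "card R1 \<le> 4 * r * t^2" unfolding R1_def using cardR_bound[OF ct t1] cf(1) r100 by simp
  have s1: "real (sum f R1) \<le> C * (\<eta> / 2)"
  proof -
    have "real (sum f R1) \<le> real (4 * r * t^2) * (C * (1 / real t^5))"
    proof -
      have "real (card R1) \<le> real (4 * r * t^2)" using cR1 by (simp only: of_nat_le_iff)
      then have "real (card R1) * (C * (1 / real t^5) * (1/2)^(k-k)) \<le> real (4 * r * t^2) * (C * (1 / real t^5))"
      proof -
        have "0 \<le> C * (1 / real t^5)" using Cp Tp by simp
        from mult_right_mono[OF \<open>real (card R1) \<le> real (4 * r * t^2)\<close> this] show ?thesis by simp
      qed
      then show ?thesis using mb1 by linarith
    qed
    also have "\<dots> = C * (4 * real r / real t^3)"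
      using Tp by (simp add: field_simps power_add[symmetric] eval_nat_numeral)
    also have "\<dots> \<le> C * (\<eta> / 2)"
    proof (rule mult_left_mono[OF _ Cp])
      have "8 * real r / \<eta> \<le> real t" using tb z z2 by linarith
      then have "8 * real r \<le> real t * \<eta>" using eta by (simp add: field_simps)
      moreover have "real t \<le> real t^3"
      proof -
        have "real t ^ 1 \<le> real t ^ 3" using t1 by (intro power_increasing) auto
        then show ?thesis by simp
      qed
      ultimately have "8 * real r \<le> real t^3 * \<eta>" using eta by (smt (verit) mult_right_mono)
      then show "4 * real r / real t^3 \<le> \<eta> / 2" using Tp by (simp add: field_simps)
    qed
    finally show ?thesis .
  qed
  have s0: "real (sum f (R0 - R1)) \<le> C * (1 + \<eta> / 2)"
  proof -
    have "real (sum f (R0 - R1)) \<le> C * (1 + real k * (real r * real k^2 / real (t-k)))"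
      using main_bound0[OF ct Nn r100 cf(1) k1 cf(2) cf(5)] unfolding f_def R0_def R1_def C_def .
    also have "\<dots> \<le> C * (1 + \<eta> / 2)"
    proof (rule mult_left_mono[OF _ Cp])
      define T7 where "T7 = real t powr (1/7)"
      have T7p: "T7 > 0" unfolding T7_def using Tp by simp
      have "4 * real r / \<eta> = ((4 * real r / \<eta>)^7) powr (1/7)"
      proof -
        have b: "4 * real r / \<eta> > 0" using eta r100 by simp
        have "((4 * real r / \<eta>) powr (real 7)) powr (1/7) = (4 * real r / \<eta>) powr (real 7 * (1/7))"
          by (rule powr_powr)
        also have "real 7 * (1/7) = (1::real)" by simp
        also have "(4 * real r / \<eta>) powr 1 = 4 * real r / \<eta>" using b by (simp only: powr_one_gt_zero_iff)
        finally have fin: "((4 * real r / \<eta>) powr (real 7)) powr (1/7) = 4 * real r / \<eta>" .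
        have "(4 * real r / \<eta>) powr (real 7) = (4 * real r / \<eta>)^7" by (rule powr_realpow[OF b])
        then show ?thesis using fin by simp
      qed
      also have "\<dots> \<le> T7"
      proof -
        have "(4 * real r / \<eta>)^7 \<le> real t" using tb z z3 by linarith
        then show ?thesis unfolding T7_def using z2 by (intro powr_mono2) auto
      qed
      finally have T7b: "4 * real r / \<eta> \<le> T7" .
      have "real k * (real r * real k^2 / real (t-k)) \<le> real t powr (2/7) * (2*real r * real t powr (-3/7))"
        using cf(3) cf(4) by (intro mult_mono) auto
      also have "\<dots> = 2 * real r * (real t powr (2/7) * real t powr (-3/7))" by simp
      also have "real t powr (2/7) * real t powr (-3/7) = real t powr (2/7 + -3/7)" by (simp only: powr_add)
      also have "\<dots> = 1 / T7" unfolding T7_def by (simp add: powr_minus_divide[symmetric])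
      also have "2 * real r * (1 / T7) \<le> \<eta> / 2"
        using T7b T7p eta by (simp add: field_simps)
      finally show "1 + real k * (real r * real k^2 / real (t-k)) \<le> 1 + \<eta> / 2" by simp
    qed
    finally show ?thesis .
  qed
  have R10: "R1 \<subseteq> R0" unfolding R0_def R1_def Rset_def by auto
  have finR0: "finite R0" unfolding R0_def by (rule finite_Rset)
  have "sum f R0 = sum f (R0 - R1) + sum f R1" using sum.subset_diff[OF R10 finR0] .
  then have "card F0 \<le> sum f (R0 - R1) + sum f R1" using cnt0 by simp
  then have "real (card F0) \<le> real (sum f (R0 - R1) + sum f R1)" by (simp only: of_nat_le_iff)
  then have "real (card F0) \<le> real (sum f (R0 - R1)) + real (sum f R1)" by (simp only: of_nat_add)
  also have "\<dots> \<le> C * (1 + \<eta> / 2) + C * (\<eta> / 2)" using s0 s1 by linarith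
  also have "\<dots> = (1 + \<eta>) * C" by (simp add: algebra_simps)
  finally have A1: "real (card F0) \<le> (1 + \<eta>) * C" .
  have "real (card F1) \<le> C * (\<eta> / 2)" using cnt1 s1 by (meson of_nat_le_iff order_trans)
  also have "\<dots> \<le> \<eta> * C" using Cp eta by (simp add: mult_left_mono)
  finally have A2: "real (card F1) \<le> \<eta> * C" .
  show ?thesis using A1 A2 unfolding F0_def F1_def C_def by simp
qed


theorem lemma5p2:
  fixes \<epsilon> :: real and r :: nat
  assumes eps_pos: "\<epsilon> > 0"
    and r_ge: "r \<ge> 100"
    and r_cond: "(3 * real r - 1) / (real r - 1) * (2/7 - \<epsilon>/2) < 6/7 - \<epsilon>"
  shows
   "(\<exists>t0 k0 :: real. \<forall>(n::nat) (t::nat) (q::nat) (S::pperm set) (T::nat \<Rightarrow> pperm set)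
        (k::nat) (A::nat \<Rightarrow> pperm).
      real n powr 0.99 < real t \<and> t < n \<and> t \<le> q \<and> q \<le> n \<and>
      (\<forall>P\<in>S. partial_perm n P \<and> card P \<le> q) \<and> t_intersecting t S \<and>
      peeling t q S T \<and>
      1 \<le> k \<and> k \<le> q - t \<and> real k \<le> real t powr (2/7 - \<epsilon>/2) \<and>
      (\<forall>i\<in>{1..r}. A i \<in> Wfam t T k) \<and>
      int (card (\<Inter>i\<in>{1..r}. A i)) = int t - (int r - 2) * int k \<and>
      real t > t0 \<and> real k > k0
      \<longrightarrow> (\<forall>j<k. real (card {X \<in> T k. card X = t + j})
                    \<le> real t powr (-0.1) * 2 powr (real j - real k) * real (t choose j)))
    \<and>
    (\<forall>\<eta>::real. \<eta> > 0 \<longrightarrow>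
     (\<exists>t0 k0 :: real. \<forall>(n::nat) (t::nat) (q::nat) (S::pperm set) (T::nat \<Rightarrow> pperm set)
        (k::nat) (A::nat \<Rightarrow> pperm).
      real n powr 0.99 < real t \<and> t < n \<and> t \<le> q \<and> q \<le> n \<and>
      (\<forall>P\<in>S. partial_perm n P \<and> card P \<le> q) \<and> t_intersecting t S \<and>
      peeling t q S T \<and>
      1 \<le> k \<and> k \<le> q - t \<and> real k \<le> real t powr (2/7 - \<epsilon>/2) \<and>
      (\<forall>i\<in>{1..r}. A i \<in> Wfam t T k) \<and>
      int (card (\<Inter>i\<in>{1..r}. A i)) = int t - (int r - 2) * int k \<and>
      real t > t0 \<and> real k > k0
      \<longrightarrow> real (card (Wfam t T k)) \<le> (1 + \<eta>) * real (t choose k) \<and>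
          real (card {X \<in> Wfam t T k. \<not> X \<subseteq> (\<Union>i\<in>{1..r}. A i)}) \<le> \<eta> * real (t choose k)))"
  proof (rule conjI)
  show "\<exists>t0 k0 :: real. \<forall>(n::nat) (t::nat) (q::nat) (S::pperm set) (T::nat \<Rightarrow> pperm set)
        (k::nat) (A::nat \<Rightarrow> pperm).
      real n powr 0.99 < real t \<and> t < n \<and> t \<le> q \<and> q \<le> n \<and>
      (\<forall>P\<in>S. partial_perm n P \<and> card P \<le> q) \<and> t_intersecting t S \<and>
      peeling t q S T \<and>
      1 \<le> k \<and> k \<le> q - t \<and> real k \<le> real t powr (2/7 - \<epsilon>/2) \<and>
      (\<forall>i\<in>{1..r}. A i \<in> Wfam t T k) \<and>
      int (card (\<Inter>i\<in>{1..r}. A i)) = int t - (int r - 2) * int k \<and>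
      real t > t0 \<and> real k > k0
      \<longrightarrow> (\<forall>j<k. real (card {X \<in> T k. card X = t + j})
                    \<le> real t powr (-0.1) * 2 powr (real j - real k) * real (t choose j))"
    apply (intro exI[of _ "2*(2*real r)^100 + 4*real r"] exI[of _ "0::real"] allI impI)
    apply (elim conjE)
    apply (rule partA_core[OF r_ge eps_pos])
    apply assumption+
    done
next
  show "\<forall>\<eta>::real. \<eta> > 0 \<longrightarrow>
     (\<exists>t0 k0 :: real. \<forall>(n::nat) (t::nat) (q::nat) (S::pperm set) (T::nat \<Rightarrow> pperm set)
        (k::nat) (A::nat \<Rightarrow> pperm).
      real n powr 0.99 < real t \<and> t < n \<and> t \<le> q \<and> q \<le> n \<and>
      (\<forall>P\<in>S. partial_perm n P \<and> card P \<le> q) \<and> t_intersecting t S \<and>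
      peeling t q S T \<and>
      1 \<le> k \<and> k \<le> q - t \<and> real k \<le> real t powr (2/7 - \<epsilon>/2) \<and>
      (\<forall>i\<in>{1..r}. A i \<in> Wfam t T k) \<and>
      int (card (\<Inter>i\<in>{1..r}. A i)) = int t - (int r - 2) * int k \<and>
      real t > t0 \<and> real k > k0
      \<longrightarrow> real (card (Wfam t T k)) \<le> (1 + \<eta>) * real (t choose k) \<and>
          real (card {X \<in> Wfam t T k. \<not> X \<subseteq> (\<Union>i\<in>{1..r}. A i)}) \<le> \<eta> * real (t choose k))"
  proof (intro allI impI)
    fix \<eta> :: real assume eta: "\<eta> > 0"
    show "\<exists>t0 k0 :: real. \<forall>(n::nat) (t::nat) (q::nat) (S::pperm set) (T::nat \<Rightarrow> pperm set)
        (k::nat) (A::nat \<Rightarrow> pperm).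
      real n powr 0.99 < real t \<and> t < n \<and> t \<le> q \<and> q \<le> n \<and>
      (\<forall>P\<in>S. partial_perm n P \<and> card P \<le> q) \<and> t_intersecting t S \<and>
      peeling t q S T \<and>
      1 \<le> k \<and> k \<le> q - t \<and> real k \<le> real t powr (2/7 - \<epsilon>/2) \<and>
      (\<forall>i\<in>{1..r}. A i \<in> Wfam t T k) \<and>
      int (card (\<Inter>i\<in>{1..r}. A i)) = int t - (int r - 2) * int k \<and>
      real t > t0 \<and> real k > k0
      \<longrightarrow> real (card (Wfam t T k)) \<le> (1 + \<eta>) * real (t choose k) \<and>
          real (card {X \<in> Wfam t T k. \<not> X \<subseteq> (\<Union>i\<in>{1..r}. A i)}) \<le> \<eta> * real (t choose k)"
      apply (intro exI[of _ "2*(2*real r)^100 + 8*real r/\<eta> + (4*real r/\<eta>)^7"] exI[of _ "0::real"] allI impI)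
      apply (elim conjE)
      apply (rule partB_core[OF r_ge eps_pos eta])
      apply assumption+
      done
  qed
qed

end
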